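(* Let $R$ be a unital ring with involution, let $a\in R$ be core invertible with core inverse $a^{\circledast}$, and let $b\in R$. Then the following conditions are equivalent: (1) $a\overset{\circledast}{\leq} b$; (2) $b a^{\circledast} b=a$ and $a^{\circledast} b a^{\circledast}=a^{\circledast}$; (3) $a a^{\circledast} b=a=b a^{\circledast} a$; (4) $b-a\in {}^{\circ}a\cap (a^{*})^{\circ}$, i.e. $(b-a)a=0$ and $a^{*}(b-a)=0$; (5) $b-a\in (1-aa^{\circledast})R\cap R(1-aa^{\circledast})$; (6) $b-a\in {}^{\circ}(aa^{\circledast})\cap (aa^{\circledast})^{\circ}$, i.e. $(b-a)aa^{\circledast}=0$ and $aa^{\circledast}(b-a)=0$.
   Context: $R$ is a ring with identity and an involution $x\mapsto x^{*}$ (so $(x^* )^*=x$, $(xy)^*=y^*x^*$, $(x+y)^*=x^*+y^*$). An element $a\in R$ is core invertible if there exists $x\in R$ with $axa=a$, $xR=aR$ and $Rx=Ra^{*}$; such $x$ is unique, called the core inverse of $a$ and denoted $a^{\circledast}$. For $a$ core invertible and $b\in R$, the core partial order is defined by $a\overset{\circledast}{\leq} b$ iff $a^{\circledast}a=a^{\circledast}b$ and $aa^{\circledast}=ba^{\circledast}$. For $c\in R$, ${}^{\circ}c=\{x\in R: xc=0\}$ and $c^{\circ}=\{x\in R: cx=0\}$; $cR=\{cx:x\in R\}$, $Rc=\{xc:x\in R\}$. *)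

theory Defs
  imports Main
begin

class ring_1_involution = ring_1 +
  fixes invol :: "'a \<Rightarrow> 'a"
  assumes invol_invol: "invol (invol x) = x"
    and invol_mult: "invol (x * y) = invol y * invol x"
    and invol_add: "invol (x + y) = invol x + invol y"

definition right_ideal :: "'a::ring_1 \<Rightarrow> 'a set" where
  "right_ideal c = {c * x | x. True}"

definition left_ideal :: "'a::ring_1 \<Rightarrow> 'a set" where
  "left_ideal c = {x * c | x. True}"

definition left_annihilator :: "'a::ring_1 \<Rightarrow> 'a set" where
  "left_annihilator c = {x. x * c = 0}"

definition right_annihilator :: "'a::ring_1 \<Rightarrow> 'a set" where
  "right_annihilator c = {x. c * x = 0}"

definition is_core_inverse :: "'a::ring_1_involution \<Rightarrow> 'a \<Rightarrow> bool" where
  "is_core_inverse a x \<longleftrightarrow> a * x * a = a \<and> right_ideal x = right_ideal a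
     \<and> left_ideal x = left_ideal (invol a)"

definition core_invertible :: "'a::ring_1_involution \<Rightarrow> bool" where
  "core_invertible a \<longleftrightarrow> (\<exists>x. is_core_inverse a x)"

definition core_inv :: "'a::ring_1_involution \<Rightarrow> 'a" where
  "core_inv a = (THE x. is_core_inverse a x)"

definition core_order :: "'a::ring_1_involution \<Rightarrow> 'a \<Rightarrow> bool" where
  "core_order a b \<longleftrightarrow> core_inv a * a = core_inv a * b \<and> a * core_inv a = b * core_inv a"

end

theory Submission
  imports Defs
begin
lemma ci_facts:
  fixes a x :: "'a::ring_1_involution"
  assumes "is_core_inverse a x"
  shows "a*x*a = a" "x*a*x = x" "x*a*a = a" "a*x*x = x" "invol (a*x) = a*x"
proof -
  have axa: "a*x*a = a" using assms unfolding is_core_inverse_def by blast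
  have RI: "right_ideal x = right_ideal a" and LI: "left_ideal x = left_ideal (invol a)"
    using assms unfolding is_core_inverse_def by auto
  have rs: "c \<in> right_ideal c" for c :: 'a unfolding right_ideal_def
    by (rule CollectI, rule exI[of _ 1], simp)
  have ls: "c \<in> left_ideal c" for c :: 'a unfolding left_ideal_def
    by (rule CollectI, rule exI[of _ 1], simp)
  have "x \<in> right_ideal a" using rs[of x] RI by simp
  then obtain u where u: "x = a*u" unfolding right_ideal_def by blast
  have "a \<in> right_ideal x" using rs[of a] RI by simp
  then obtain v where v: "a = x*v" unfolding right_ideal_def by blast
  have "x \<in> left_ideal (invol a)" using ls[of x] LI by simp
  then obtain w where w: "x = w * invol a" unfolding left_ideal_def by blast
  have axx: "a*x*x = x"
  proof -
    have "a*x*x = (a*x*a)*u" by (simp add: u mult.assoc)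
    also have "\<dots> = a*u" by (simp add: axa)
    also have "\<dots> = x" by (rule u[symmetric])
    finally show ?thesis .
  qed
  have ia: "invol a = invol a * (invol x * invol a)"
  proof -
    have "invol a = invol (a*x*a)" using axa by simp
    thus ?thesis by (simp add: invol_mult)
  qed
  have x1: "x = x * invol (a*x)"
  proof -
    have "x = w * (invol a * (invol x * invol a))" by (subst ia[symmetric]) (rule w)
    also have "\<dots> = (w * invol a) * (invol x * invol a)" by (simp add: mult.assoc)
    also have "\<dots> = x * invol (a*x)" using w by (simp add: invol_mult)
    finally show ?thesis .
  qed
  have e: "a*x = (a*x)*invol(a*x)"
  proof -
    have "a*x = a*(x*invol(a*x))" using x1 by simp
    thus ?thesis by (simp add: mult.assoc)
  qed
  have sa: "invol (a*x) = a*x"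
  proof -
    have "invol (a*x) = invol ((a*x)*invol(a*x))" using e by simp
    also have "\<dots> = (a*x)*invol(a*x)" by (simp add: invol_mult invol_invol)
    also have "\<dots> = a*x" by (rule e[symmetric])
    finally show ?thesis .
  qed
  have xax: "x*a*x = x"
  proof -
    have "x*a*x = x*invol(a*x)" by (simp add: sa mult.assoc)
    thus ?thesis using x1 by simp
  qed
  have xaa: "x*a*a = a"
  proof -
    have "x*a*a = (x*a*x)*v" by (simp add: v mult.assoc)
    also have "\<dots> = x*v" by (simp add: xax)
    also have "\<dots> = a" by (rule v[symmetric])
    finally show ?thesis .
  qed
  show "a*x*a = a" "x*a*x = x" "x*a*a = a" "a*x*x = x" "invol (a*x) = a*x"
    using axa xax xaa axx sa by auto
qed

lemma ci_unique:
  fixes a x y :: "'a::ring_1_involution"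
  assumes "is_core_inverse a x" "is_core_inverse a y"
  shows "x = y"
proof -
  note X = ci_facts[OF assms(1)] and Y = ci_facts[OF assms(2)]
  have "a*x = invol(a*x)" by (simp add: X(5))
  also have "\<dots> = invol((a*y*a)*x)" by (simp add: Y(1))
  also have "\<dots> = invol(a*x)*invol(a*y)" by (simp add: invol_mult mult.assoc)
  also have "\<dots> = a*x*(a*y)" by (simp add: X(5) Y(5))
  also have "\<dots> = (a*x*a)*y" by (simp add: mult.assoc)
  also have "\<dots> = a*y" by (simp add: X(1))
  finally have axy: "a*x = a*y" .
  have "y*a*x = y*a*(a*x*x)" by (simp only: X(4))
  also have "\<dots> = (y*a*a)*(x*x)" by (simp add: mult.assoc)
  also have "\<dots> = a*(x*x)" by (simp add: Y(3))
  also have "\<dots> = x" by (simp add: X(4) mult.assoc[symmetric])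
  finally have 1: "y*a*x = x" .
  have "y*a*x = y*(a*y)" by (simp add: axy mult.assoc)
  also have "\<dots> = y" by (simp add: Y(2) mult.assoc[symmetric])
  finally show ?thesis using 1 by simp
qed


lemma D1: "((b::'a::ring_1) - a)*c = 0 \<longleftrightarrow> b*c = a*c"
  by (simp add: left_diff_distrib)
lemma D2: "c*((b::'a::ring_1) - a) = 0 \<longleftrightarrow> c*b = c*a"
  by (simp add: right_diff_distrib)

theorem theorem2p3:
  fixes a b :: "'a::ring_1_involution"
  assumes "core_invertible a"
  shows "(core_order a b \<longleftrightarrow>
            (b * core_inv a * b = a \<and> core_inv a * b * core_inv a = core_inv a))
       \<and> (core_order a b \<longleftrightarrow>
            (a * core_inv a * b = a \<and> a = b * core_inv a * a))
       \<and> (core_order a b \<longleftrightarrow>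
            b - a \<in> left_annihilator a \<inter> right_annihilator (invol a))
       \<and> (core_order a b \<longleftrightarrow>
            b - a \<in> right_ideal (1 - a * core_inv a) \<inter> left_ideal (1 - a * core_inv a))
       \<and> (core_order a b \<longleftrightarrow>
            b - a \<in> left_annihilator (a * core_inv a) \<inter> right_annihilator (a * core_inv a))"
proof -
  obtain x0 where x0: "is_core_inverse a x0" using assms unfolding core_invertible_def by blast
  have ci: "is_core_inverse a (core_inv a)"
    unfolding core_inv_def by (rule theI[of _ x0]) (use x0 ci_unique in auto)
  define x where "x = core_inv a"
  note F = ci_facts[OF ci[folded x_def]]
  have axa: "a*x*a = a" and xax: "x*a*x = x" and xaa: "x*a*a = a" and axx: "a*x*x = x"
    and sa: "invol (a*x) = a*x" using F by auto
  have C: "core_order a b \<longleftrightarrow> x*a = x*b \<and> a*x = b*x"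
    unfolding core_order_def x_def by simp
  have fwd1: "a*x*b = a" if h1: "x*a = x*b"
  proof -
    have "a*x*b = a*(x*a)" by (simp add: mult.assoc h1)
    also have "\<dots> = a" by (simp add: axa mult.assoc[symmetric])
    finally show ?thesis .
  qed
  have fwd2: "b*a = a*a" if h2: "a*x = b*x"
  proof -
    have "b*a = b*(x*a*a)" by (simp add: xaa)
    also have "\<dots> = (b*x)*(a*a)" by (simp add: mult.assoc)
    also have "\<dots> = (a*x)*(a*a)" by (simp add: h2)
    also have "\<dots> = (a*x*a)*a" by (simp add: mult.assoc)
    also have "\<dots> = a*a" by (simp add: axa)
    finally show ?thesis .
  qed
  have bk1: "x*b = x*a" if h: "a*x*b = a"
  proof -
    have "x*b = (x*a*x)*b" by (simp add: xax)
    also have "\<dots> = x*(a*x*b)" by (simp add: mult.assoc)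
    also have "\<dots> = x*a" by (simp add: h)
    finally show ?thesis .
  qed
  have c6: "core_order a b \<longleftrightarrow> b*(a*x) = a*(a*x) \<and> a*x*b = a"
  proof
    assume h: "core_order a b"
    hence h1: "x*a = x*b" "a*x = b*x" using C by auto
    have "b*a = a*a" using fwd2 h1 by blast
    hence "b*a*x = a*a*x" by simp
    thus "b*(a*x) = a*(a*x) \<and> a*x*b = a" using fwd1 h1 by (simp add: mult.assoc)
  next
    assume h: "b*(a*x) = a*(a*x) \<and> a*x*b = a"
    have "b*x = b*(a*x*x)" by (simp add: axx)
    also have "\<dots> = (b*(a*x))*x" by (simp add: mult.assoc)
    also have "\<dots> = (a*(a*x))*x" using h by simp
    also have "\<dots> = a*(a*x*x)" by (simp add: mult.assoc)
    also have "\<dots> = a*x" by (simp add: axx)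
    finally show "core_order a b" using C bk1 h by simp
  qed
  have E6: "b - a \<in> left_annihilator (a*x) \<inter> right_annihilator (a*x) \<longleftrightarrow> b*(a*x) = a*(a*x) \<and> a*x*b = a"
    unfolding left_annihilator_def right_annihilator_def
    by (simp add: D1 D2 axa)
  have c2: "core_order a b \<longleftrightarrow> (b*x*b = a \<and> x*b*x = x)"
  proof
    assume "core_order a b"
    hence h1: "x*a = x*b" "a*x = b*x" using C by auto
    have "b*x*b = a*x*b" by (simp add: h1(2))
    hence 1: "b*x*b = a" using fwd1 h1 by simp
    have "x*b*x = x*(b*x)" by (simp add: mult.assoc)
    also have "\<dots> = x*(a*x)" by (simp add: h1(2))
    also have "\<dots> = x" by (simp add: xax mult.assoc[symmetric])
    finally show "b*x*b = a \<and> x*b*x = x" using 1 by simp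
  next
    assume h: "b*x*b = a \<and> x*b*x = x"
    have "x*a = x*(b*x*b)" by (simp add: h)
    also have "\<dots> = (x*b*x)*b" by (simp add: mult.assoc)
    also have "\<dots> = x*b" by (simp add: h)
    finally have 1: "x*a = x*b" .
    have "a*x = (b*x*b)*x" by (simp add: h)
    also have "\<dots> = b*(x*b*x)" by (simp add: mult.assoc)
    also have "\<dots> = b*x" by (simp add: h)
    finally show "core_order a b" using C 1 by simp
  qed
  have c3: "core_order a b \<longleftrightarrow> (a*x*b = a \<and> a = b*x*a)"
  proof
    assume "core_order a b"
    hence h1: "x*a = x*b" "a*x = b*x" using C by auto
    have "b*x*a = a*x*a" by (simp add: h1(2))
    thus "a*x*b = a \<and> a = b*x*a" using fwd1 h1 axa by simp
  next
    assume h: "a*x*b = a \<and> a = b*x*a"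
    have "b*x = b*(x*a*x)" by (simp add: xax)
    also have "\<dots> = (b*x*a)*x" by (simp add: mult.assoc)
    also have "\<dots> = a*x" using h by simp
    finally show "core_order a b" using C bk1 h by simp
  qed
  have ia: "invol a * (a*x) = invol a"
  proof -
    have "invol a * (a*x) = invol a * invol (a*x)" by (simp add: sa)
    also have "\<dots> = invol (a*x*a)" by (simp add: invol_mult)
    also have "\<dots> = invol a" by (simp add: axa)
    finally show ?thesis .
  qed
  have c4: "core_order a b \<longleftrightarrow> b - a \<in> left_annihilator a \<inter> right_annihilator (invol a)"
  proof -
    have E: "b - a \<in> left_annihilator a \<inter> right_annihilator (invol a) \<longleftrightarrow>
       b*a = a*a \<and> invol a * b = invol a * a"
      unfolding left_annihilator_def right_annihilator_def by (simp add: D1 D2)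
    show ?thesis unfolding E
    proof
      assume "core_order a b"
      hence h1: "x*a = x*b" "a*x = b*x" using C by auto
      have "invol a * b = invol a * (a*x) * b" by (simp add: ia)
      also have "\<dots> = invol a * (a*x*b)" by (simp add: mult.assoc)
      also have "\<dots> = invol a * a" using fwd1 h1 by simp
      finally show "b*a = a*a \<and> invol a * b = invol a * a" using fwd2 h1 by simp
    next
      assume h: "b*a = a*a \<and> invol a * b = invol a * a"
      have "b*(a*x) = a*(a*x)" using h by (simp add: mult.assoc[symmetric])
      moreover have "a*x*b = a"
      proof -
        have "a*x*b = invol(a*x)*b" by (simp add: sa)
        also have "\<dots> = invol x*(invol a*b)" by (simp add: invol_mult mult.assoc)
        also have "\<dots> = invol x*(invol a*a)" using h by simp
        also have "\<dots> = invol(a*x)*a" by (simp add: invol_mult mult.assoc)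
        also have "\<dots> = a" by (simp add: sa axa)
        finally show ?thesis .
      qed
      ultimately show "core_order a b" using c6 by simp
    qed
  qed
  have p: "a*x*(a*x) = a*x"
  proof -
    have "a*x*(a*x) = (a*x*a)*x" by (simp add: mult.assoc)
    thus ?thesis by (simp add: axa)
  qed
  have c5: "core_order a b \<longleftrightarrow> b - a \<in> right_ideal (1 - a*x) \<inter> left_ideal (1 - a*x)"
  proof
    assume "core_order a b"
    hence "b*(a*x) = a*(a*x) \<and> a*x*b = a" using c6 by simp
    hence h: "(b-a)*(a*x) = 0" "(a*x)*(b-a) = 0" by (simp_all add: D1 D2 axa)
    have "(1 - a*x)*(b-a) = (b-a) - (a*x)*(b-a)" by (simp add: left_diff_distrib)
    hence 1: "b - a = (1 - a*x)*(b-a)" using h by simp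
    have "(b-a)*(1 - a*x) = (b-a) - (b-a)*(a*x)" by (simp add: right_diff_distrib)
    hence 2: "b - a = (b-a)*(1 - a*x)" using h by simp
    show "b - a \<in> right_ideal (1 - a*x) \<inter> left_ideal (1 - a*x)"
      unfolding right_ideal_def left_ideal_def using 1 2 by blast
  next
    assume "b - a \<in> right_ideal (1 - a*x) \<inter> left_ideal (1 - a*x)"
    then obtain r s where r: "b - a = (1 - a*x)*r" and s: "b - a = s*(1 - a*x)"
      unfolding right_ideal_def left_ideal_def by blast
    have q1: "(a*x)*(1 - a*x) = 0" by (simp add: right_diff_distrib p)
    have q2: "(1 - a*x)*(a*x) = 0" by (simp add: left_diff_distrib p)
    have "(a*x)*(b-a) = ((a*x)*(1 - a*x))*r" by (subst r) (simp add: mult.assoc)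
    hence h1: "(a*x)*(b-a) = 0" using q1 by simp
    have "(b-a)*(a*x) = s*((1 - a*x)*(a*x))" by (subst s) (simp add: mult.assoc)
    hence h2: "(b-a)*(a*x) = 0" using q2 by simp
    show "core_order a b" using c6 h1 h2 by (simp add: D1 D2 axa)
  qed
  show ?thesis using c2 c3 c4 c5 c6 E6 unfolding x_def by simp
qed

end
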